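(* Let $\sigma>0$, $a>0$, $m\in\mathbb R$, and $u_0(x)=\sqrt{\frac{a}{2\pi}}e^{-\frac a2(x-m)^2}$. Then the solution $u$ of $$\partial_t u=\sigma^2\partial_{xx}u+\Big(-x^2+\int_{\mathbb R}y^2u(t,y)\,dy\Big)u,\quad t>0,\ x\in\mathbb R,\qquad u(0,\cdot)=u_0,$$ remains Gaussian for $t>0$ and is given by $$u(t,x)=\sqrt{\frac{a(t)}{2\pi}}e^{-\frac{a(t)}{2}(x-m(t))^2},\quad a(t):=\frac{a\sigma+\tanh(2\sigma t)}{\sigma(1+a\sigma\tanh(2\sigma t))},\quad m(t):=\frac{ma\sigma}{a\sigma\cosh(2\sigma t)+\sinh(2\sigma t)}.$$
   Context: The solution is the unique solution in $C(\mathbb R_+;L^1(\mathbb R))\cap L^1_{\rm loc}((0,\infty);\{g\in L^1(\mathbb R):\int x^2|g|<\infty\})$. *)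

theory Defs
  imports "HOL-Analysis.Analysis"
begin

definition gaussian :: "real \<Rightarrow> real \<Rightarrow> real \<Rightarrow> real" where
  "gaussian a m x = sqrt (a / (2 * pi)) * exp (- (a / 2) * (x - m)^2)"

definition a_t :: "real \<Rightarrow> real \<Rightarrow> real \<Rightarrow> real" where
  "a_t \<sigma> a t = (a * \<sigma> + tanh (2 * \<sigma> * t)) / (\<sigma> * (1 + a * \<sigma> * tanh (2 * \<sigma> * t)))"

definition m_t :: "real \<Rightarrow> real \<Rightarrow> real \<Rightarrow> real \<Rightarrow> real" where
  "m_t \<sigma> a m t = m * a * \<sigma> / (a * \<sigma> * cosh (2 * \<sigma> * t) + sinh (2 * \<sigma> * t))"

text \<open>Solution of
  d/dt u = sigma^2 u_xx + (-x^2 + int y^2 u(t,y) dy) u, t>0, x real, u(0) = u0,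
  in the class C(R_+; L^1) \<inter> L^1_loc((0,\<infinity>); L^1 with weight x^2);
  the equation is required to hold classically for t > 0.\<close>
definition is_solution :: "real \<Rightarrow> (real \<Rightarrow> real) \<Rightarrow> (real \<Rightarrow> real \<Rightarrow> real) \<Rightarrow> bool" where
  "is_solution \<sigma> u0 u \<longleftrightarrow>
     u 0 = u0
   \<and> (\<forall>t\<ge>0. u t absolutely_integrable_on UNIV)
   \<and> (\<forall>t0\<ge>0. ((\<lambda>t. integral UNIV (\<lambda>y. \<bar>u t y - u t0 y\<bar>)) \<longlongrightarrow> 0) (at t0 within {0..}))
   \<and> (\<forall>t>0. (\<lambda>y. y^2 * u t y) absolutely_integrable_on UNIV)
   \<and> (\<forall>c d. 0 < c \<and> c \<le> d \<longrightarrow>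
        (\<lambda>t. integral UNIV (\<lambda>y. y^2 * \<bar>u t y\<bar>)) integrable_on {c..d})
   \<and> (\<forall>t>0. \<forall>x. u t differentiable (at x) \<and> deriv (u t) differentiable (at x))
   \<and> (\<forall>t>0. \<forall>x. ((\<lambda>s. u s x) has_real_derivative
          (\<sigma>^2 * deriv (deriv (u t)) x
           + (- (x^2) + integral UNIV (\<lambda>y. y^2 * u t y)) * u t x)) (at t))"

end

theory Submission
  imports Defs "HOL-Probability.Distributions"
begin

lemma gaussian_normal:
  assumes "A > 0"
  shows "gaussian A M x = normal_density M (1 / sqrt A) x"
proof -
  have "1 / sqrt (2 * pi * (1 / sqrt A)\<^sup>2) = sqrt (A / (2*pi))"
    using assms by (simp add: real_sqrt_divide power_divide real_sqrt_mult)
  moreover have "-(x - M)\<^sup>2 / (2 * (1 / sqrt A)\<^sup>2) = - (A / 2) * (x - M)^2"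
    using assms by (simp add: power_divide)
  ultimately show ?thesis unfolding gaussian_def normal_density_def by simp
qed

lemma gaussian_nonneg: "A > 0 \<Longrightarrow> gaussian A M x \<ge> 0"
  unfolding gaussian_def by simp

lemma gaussian_int:
  assumes "A > 0"
  shows "integrable lborel (gaussian A M)" "integral UNIV (gaussian A M) = 1"
    "gaussian A M absolutely_integrable_on UNIV"
proof -
  have e: "gaussian A M = normal_density M (1 / sqrt A)" using gaussian_normal[OF assms] by auto
  have s: "0 < 1 / sqrt A" using assms by simp
  show i: "integrable lborel (gaussian A M)" unfolding e using integrable_normal_density[OF s] .
  show "integral UNIV (gaussian A M) = 1" using integral_lborel[OF i] e integral_normal_density[OF s] by simp
  show "gaussian A M absolutely_integrable_on UNIV"
    using i by (simp add: integrable_completion set_integrable_def)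
qed

lemma gaussian_mom2:
  assumes "A > 0"
  shows "integrable lborel (\<lambda>y. y^2 * gaussian A M y)"
    "integral UNIV (\<lambda>y. y^2 * gaussian A M y) = 1 / A + M^2"
    "(\<lambda>y. y^2 * gaussian A M y) absolutely_integrable_on UNIV"
proof -
  have e: "gaussian A M = normal_density M (1 / sqrt A)" using gaussian_normal[OF assms] by auto
  have s: "0 < 1 / sqrt A" using assms by simp
  have h1: "has_bochner_integral lborel (\<lambda>x. normal_density M (1 / sqrt A) x * (x - M)^(2*1)) (1/A)"
    using normal_moment_even[OF s, of M 1] assms by (simp add: power_divide)
  have h2: "has_bochner_integral lborel (\<lambda>x. normal_density M (1 / sqrt A) x * x) M"
    using normal_moment_nz_1[OF s] .
  have h3: "has_bochner_integral lborel (normal_density M (1 / sqrt A)) 1"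
    using has_bochner_integral_integrable[OF integrable_normal_density[OF s]] integral_normal_density[OF s] by simp
  have "has_bochner_integral lborel (\<lambda>x. normal_density M (1 / sqrt A) x * (x - M)^(2*1)
      + 2 * M * (normal_density M (1 / sqrt A) x * x) - M^2 * normal_density M (1 / sqrt A) x) (1/A + 2*M*M - M^2*1)"
    by (intro has_bochner_integral_diff has_bochner_integral_add has_bochner_integral_mult_right h1 h2 h3)
  moreover have "(\<lambda>x. normal_density M (1 / sqrt A) x * (x - M)^(2*1)
      + 2 * M * (normal_density M (1 / sqrt A) x * x) - M^2 * normal_density M (1 / sqrt A) x)
     = (\<lambda>y. y^2 * gaussian A M y)"
    unfolding e by (rule ext) (simp add: power2_eq_square algebra_simps)
  ultimately have hb: "has_bochner_integral lborel (\<lambda>y. y^2 * gaussian A M y) (1/A + M^2)"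
    by (simp add: power2_eq_square add.commute)
  show i: "integrable lborel (\<lambda>y. y^2 * gaussian A M y)" using hb by (rule integrable.intros)
  show "integral UNIV (\<lambda>y. y^2 * gaussian A M y) = 1 / A + M^2"
    using integral_lborel[OF i] has_bochner_integral_integral_eq[OF hb] by simp
  show "(\<lambda>y. y^2 * gaussian A M y) absolutely_integrable_on UNIV"
    using i by (simp add: integrable_completion set_integrable_def)
qed

lemma den_pos:
  assumes "\<sigma> > 0" "a > 0" "t \<ge> 0"
  shows "1 + a * \<sigma> * tanh (2 * \<sigma> * t) > 0"
    "a * \<sigma> * cosh (2 * \<sigma> * t) + sinh (2 * \<sigma> * t) > 0"
    "a_t \<sigma> a t > 0"
proof -
  have T: "tanh (2 * \<sigma> * t) \<ge> 0" using assms by simp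
  show 1: "1 + a * \<sigma> * tanh (2 * \<sigma> * t) > 0" using assms T by (simp add: add_pos_nonneg)
  have "sinh (2 * \<sigma> * t) \<ge> 0" using assms by simp
  moreover have "cosh (2 * \<sigma> * t) > 0" by simp
  ultimately show "a * \<sigma> * cosh (2 * \<sigma> * t) + sinh (2 * \<sigma> * t) > 0"
    using assms by (simp add: add_pos_nonneg)
  show "a_t \<sigma> a t > 0" unfolding a_t_def using assms T 1 by (simp add: add_pos_nonneg)
qed

lemma alg_a:
  fixes T c a :: real
  assumes "1 + a * c * T \<noteq> 0" "c \<noteq> 0"
  shows "(((1 - T^2) * (2 * c)) * (c * (1 + a * c * T)) - (a * c + T) * (c * (a * c * ((1 - T^2) * (2 * c)))))
      / (c * (1 + a * c * T))^2 = 2 - 2 * c^2 * ((a * c + T) / (c * (1 + a * c * T)))^2"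
proof -
  define D where "D = 1 + a * c * T"
  have D: "D \<noteq> 0" using assms D_def by simp
  have "(((1 - T^2) * (2 * c)) * (c * D) - (a * c + T) * (c * (a * c * ((1 - T^2) * (2 * c)))))
      / (c * D)^2 = 2 - 2 * c^2 * ((a * c + T) / (c * D))^2"
    using D assms by (simp add: field_simps power2_eq_square) (simp add: D_def algebra_simps)
  then show ?thesis by (simp add: D_def)
qed

lemma a_t_deriv:
  assumes "\<sigma> > 0" "a > 0" "t \<ge> 0"
  shows "(a_t \<sigma> a has_real_derivative (2 - 2 * \<sigma>^2 * (a_t \<sigma> a t)^2)) (at t)"
proof -
  let ?T = "tanh (2 * \<sigma> * t)"
  have d1: "1 + a * \<sigma> * ?T > 0" using den_pos[OF assms] by simp
  have "((\<lambda>s. (a * \<sigma> + tanh (2 * \<sigma> * s)) / (\<sigma> * (1 + a * \<sigma> * tanh (2 * \<sigma> * s))))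
     has_real_derivative
     (((1 - ?T^2) * (2*\<sigma>)) * (\<sigma> * (1 + a * \<sigma> * ?T)) - (a * \<sigma> + ?T) * (\<sigma> * (a * \<sigma> * ((1 - ?T^2) * (2*\<sigma>)))))
      / (\<sigma> * (1 + a * \<sigma> * ?T))^2) (at t)"
    apply (rule derivative_eq_intros refl | simp)+
    using d1 assms by (auto simp: power2_eq_square algebra_simps)
  moreover have "(((1 - ?T^2) * (2*\<sigma>)) * (\<sigma> * (1 + a * \<sigma> * ?T)) - (a * \<sigma> + ?T) * (\<sigma> * (a * \<sigma> * ((1 - ?T^2) * (2*\<sigma>)))))
      / (\<sigma> * (1 + a * \<sigma> * ?T))^2 = 2 - 2 * \<sigma>^2 * (a_t \<sigma> a t)^2"
    unfolding a_t_def using d1 assms by (intro alg_a) auto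
  ultimately show ?thesis unfolding a_t_def[abs_def] by simp
qed

lemma alg_m:
  fixes C S c a m :: real
  assumes "C > 0" "a * c * C + S \<noteq> 0" "c \<noteq> 0" "1 + a * c * (S / C) \<noteq> 0"
  shows "- (m * a * c * ((a * c * (S * (2 * c)) + C * (2 * c))) / (a * c * C + S)^2)
       = - 2 * (m * a * c / (a * c * C + S)) / ((a * c + S / C) / (c * (1 + a * c * (S / C))))"
proof -
  define D where "D = a * c * C + S"
  have S: "S = D - a * c * C" using D_def by simp
  have D: "D \<noteq> 0" using assms D_def by simp
  have e1: "1 + a * c * (S / C) = (C + a * c * S) / C" using assms by (simp add: field_simps)
  have e2: "a * c + S / C = (a * c * C + S) / C" using assms by (simp add: field_simps)
  have E: "C + a * c * S \<noteq> 0" using assms(1,4) e1 by auto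
  have "- (m * a * c * ((a * c * (S * (2 * c)) + C * (2 * c))) / D^2)
       = - 2 * (m * a * c / D) / ((D / C) / (c * ((C + a * c * S) / C)))"
    using D E assms by (simp add: field_simps power2_eq_square)
  then show ?thesis unfolding e1 e2 D_def .
qed

lemma m_t_deriv:
  assumes "\<sigma> > 0" "a > 0" "t \<ge> 0"
  shows "(m_t \<sigma> a m has_real_derivative (- 2 * m_t \<sigma> a m t / a_t \<sigma> a t)) (at t)"
proof -
  let ?C = "cosh (2 * \<sigma> * t)" and ?S = "sinh (2 * \<sigma> * t)"
  have d: "a * \<sigma> * ?C + ?S > 0" "1 + a * \<sigma> * tanh (2 * \<sigma> * t) > 0" using den_pos[OF assms] by auto
  have "((\<lambda>s. m * a * \<sigma> / (a * \<sigma> * cosh (2 * \<sigma> * s) + sinh (2 * \<sigma> * s)))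
     has_real_derivative - (m * a * \<sigma> * ((a * \<sigma> * (?S * (2 * \<sigma>)) + ?C * (2 * \<sigma>))) / (a * \<sigma> * ?C + ?S)^2)) (at t)"
    using d(1) by (auto intro!: derivative_eq_intros simp: power2_eq_square mult_ac)
  moreover have "- (m * a * \<sigma> * ((a * \<sigma> * (?S * (2 * \<sigma>)) + ?C * (2 * \<sigma>))) / (a * \<sigma> * ?C + ?S)^2)
     = - 2 * m_t \<sigma> a m t / a_t \<sigma> a t"
    unfolding m_t_def a_t_def tanh_def using d assms by (intro alg_m) (auto simp: tanh_def)
  ultimately show ?thesis unfolding m_t_def[abs_def] by simp
qed

lemma gauss_dx: "(gaussian A M has_real_derivative gaussian A M x * (- A * (x - M))) (at x)"
  unfolding gaussian_def[abs_def]
  by (auto intro!: derivative_eq_intros simp: power2_eq_square algebra_simps)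

lemma gauss_deriv: "deriv (gaussian A M) = (\<lambda>x. gaussian A M x * (- A * (x - M)))"
  using gauss_dx DERIV_imp_deriv by blast

lemma gauss_dxx: "((\<lambda>x. gaussian A M x * (- A * (x - M))) has_real_derivative
     gaussian A M x * (A^2 * (x - M)^2 - A)) (at x)"
  by (auto intro!: derivative_eq_intros gauss_dx simp: power2_eq_square algebra_simps)

lemma gauss_deriv2: "deriv (deriv (gaussian A M)) x = gaussian A M x * (A^2 * (x - M)^2 - A)"
  unfolding gauss_deriv using gauss_dxx DERIV_imp_deriv by blast

lemma gauss_dt:
  assumes A: "(Af has_real_derivative A') (at t)" and M: "(Mf has_real_derivative M') (at t)"
    and pos: "Af t > 0"
  shows "((\<lambda>s. gaussian (Af s) (Mf s) x) has_real_derivative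
     gaussian (Af t) (Mf t) x * (A' / (2 * Af t) - A' / 2 * (x - Mf t)^2 + Af t * M' * (x - Mf t))) (at t)"
proof -
  have p: "Af t / (2 * pi) > 0" using pos by simp
  have d1: "((\<lambda>s. Af s / (2*pi)) has_real_derivative A' / (2*pi)) (at t)"
    using A by (auto intro!: derivative_eq_intros)
  have d2: "((\<lambda>s. sqrt (Af s/(2*pi))) has_real_derivative inverse (sqrt (Af t/(2*pi))) / 2 * (A'/(2*pi))) (at t)"
    using DERIV_chain2[OF DERIV_real_sqrt[OF p] d1] .
  have d3: "((\<lambda>s. - (Af s / 2) * (x - Mf s)^2) has_real_derivative
      (- (A' / 2) * (x - Mf t)^2 + (- (Af t / 2)) * (2 * (x - Mf t) * (- M')))) (at t)"
    using A M by (auto intro!: derivative_eq_intros simp: power2_eq_square algebra_simps)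
  note d4 = DERIV_chain2[OF DERIV_exp d3]
  note d5 = DERIV_mult[OF d2 d4]
  have sq: "sqrt (Af t / (2*pi)) > 0" using p by simp
  have inv: "inverse (sqrt (Af t/(2*pi))) / 2 * (A'/(2*pi)) = sqrt (Af t/(2*pi)) * (A' / (2 * Af t))"
  proof -
    have "sqrt (Af t/(2*pi)) * sqrt (Af t/(2*pi)) = Af t/(2*pi)" using p by (metis less_imp_le real_sqrt_mult_self real_sqrt_mult real_sqrt_abs abs_of_nonneg power2_eq_square)
    then show ?thesis using sq pos by (simp add: field_simps)
  qed
  show ?thesis unfolding gaussian_def
    by (rule DERIV_cong[OF d5[unfolded inv]]) (simp add: algebra_simps power2_eq_square)
qed

lemma u_isCont:
  assumes "\<sigma> > 0" "a > 0" "t0 \<ge> 0"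
  shows "isCont (\<lambda>t. gaussian (a_t \<sigma> a t) (m_t \<sigma> a m t) y) t0"
proof -
  have "isCont (a_t \<sigma> a) t0" using a_t_deriv[OF assms] by (rule DERIV_isCont)
  moreover have "isCont (m_t \<sigma> a m) t0" using m_t_deriv[OF assms] by (rule DERIV_isCont)
  ultimately show ?thesis unfolding gaussian_def by (intro continuous_intros) auto
qed

lemma L1_cont:
  assumes "\<sigma> > 0" "a > 0" "t0 \<ge> 0"
  shows "((\<lambda>t. integral UNIV (\<lambda>y. \<bar>gaussian (a_t \<sigma> a t) (m_t \<sigma> a m t) y
            - gaussian (a_t \<sigma> a t0) (m_t \<sigma> a m t0) y\<bar>)) \<longlongrightarrow> 0) (at t0 within {0..})"
proof -
  define u where "u t = gaussian (a_t \<sigma> a t) (m_t \<sigma> a m t)" for t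
  define g where "g t y = u t y + u t0 y - \<bar>u t y - u t0 y\<bar>" for t y
  have Apos: "a_t \<sigma> a t > 0" if "t \<ge> 0" for t using den_pos[OF assms(1,2) that] by simp
  have ui: "integrable lborel (u t)" if "t \<ge> 0" for t unfolding u_def using gaussian_int(1)[OF Apos[OF that]] .
  have u1: "integral UNIV (u t) = 1" if "t \<ge> 0" for t unfolding u_def using gaussian_int(2)[OF Apos[OF that]] .
  have u0: "u t y \<ge> 0" if "t \<ge> 0" for t y unfolding u_def using gaussian_nonneg[OF Apos[OF that]] .
  have di: "integrable lborel (\<lambda>y. \<bar>u t y - u t0 y\<bar>)" if "t \<ge> 0" for t
    using ui[OF that] ui[OF assms(3)] by (intro integrable_abs Bochner_Integration.integrable_diff)
  have gi: "integrable lborel (g t)" if "t \<ge> 0" for t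
    unfolding g_def[abs_def] using ui[OF that] ui[OF assms(3)] di[OF that]
    by (intro Bochner_Integration.integrable_diff Bochner_Integration.integrable_add)
  have eq: "integral UNIV (\<lambda>y. \<bar>u t y - u t0 y\<bar>) = 2 - integral UNIV (g t)" if "t \<ge> 0" for t
  proof -
    have "integral UNIV (g t) = integral UNIV (u t) + integral UNIV (u t0) - integral UNIV (\<lambda>y. \<bar>u t y - u t0 y\<bar>)"
      unfolding g_def[abs_def] using ui[OF that] ui[OF assms(3)] di[OF that]
      by (simp add: integral_lborel Bochner_Integration.integrable_diff Bochner_Integration.integrable_add)
    then show ?thesis using u1[OF that] u1[OF assms(3)] by simp
  qed
  have lim: "((\<lambda>t. integral UNIV (g t)) \<longlongrightarrow> 2) (at t0 within {0..})"
    unfolding tendsto_at_iff_sequentially comp_def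
  proof (intro allI impI)
    fix X :: "nat \<Rightarrow> real" assume X: "\<forall>i. X i \<in> {0..} - {t0}" and Xl: "X \<longlonglongrightarrow> t0"
    have X0: "X k \<ge> 0" for k using X by auto
    have conv: "(\<lambda>k. g (X k) y) \<longlonglongrightarrow> 2 * u t0 y" for y
    proof -
      have "(\<lambda>k. u (X k) y) \<longlonglongrightarrow> u t0 y"
        using isCont_tendsto_compose[OF u_isCont[OF assms, of m y] Xl] unfolding u_def by simp
      then have "(\<lambda>k. g (X k) y) \<longlonglongrightarrow> u t0 y + u t0 y - \<bar>u t0 y - u t0 y\<bar>"
        unfolding g_def by (intro tendsto_intros)
      then show ?thesis by simp
    qed
    have "(\<lambda>k. integral UNIV (g (X k))) \<longlonglongrightarrow> integral UNIV (\<lambda>y. 2 * u t0 y)"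
    proof (rule dominated_convergence(2)[where h = "\<lambda>y. 2 * u t0 y"])
      show "g (X k) integrable_on UNIV" for k using gi[OF X0] by (rule integrable_on_lborel)
      show "(\<lambda>y. 2 * u t0 y) integrable_on UNIV" using ui[OF assms(3)] by (intro integrable_on_lborel) simp
      show "norm (g (X k) y) \<le> 2 * u t0 y" for k y
        using u0[OF X0[of k], of y] u0[OF assms(3), of y] unfolding g_def by auto
      show "(\<lambda>k. g (X k) y) \<longlonglongrightarrow> 2 * u t0 y" for y by (rule conv)
    qed
    moreover have "integral UNIV (\<lambda>y. 2 * u t0 y) = 2"
      using u1[OF assms(3)] ui[OF assms(3)] by (simp add: integral_lborel)
    ultimately show "(\<lambda>k. integral UNIV (g (X k))) \<longlonglongrightarrow> 2" by simp
  qed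
  then have "((\<lambda>t. 2 - integral UNIV (g t)) \<longlongrightarrow> 2 - 2) (at t0 within {0..})"
    by (intro tendsto_intros)
  then have "((\<lambda>t. integral UNIV (\<lambda>y. \<bar>u t y - u t0 y\<bar>)) \<longlongrightarrow> 0) (at t0 within {0..})"
  proof -
    have ev: "\<forall>\<^sub>F t in at t0 within {0..}. 2 - integral UNIV (g t) = integral UNIV (\<lambda>y. \<bar>u t y - u t0 y\<bar>)"
      by (auto simp: eventually_at_filter eq)
    show ?thesis using Lim_transform_eventually[OF _ ev] \<open>((\<lambda>t. 2 - integral UNIV (g t)) \<longlongrightarrow> 2 - 2) (at t0 within {0..})\<close> by simp
  qed
  then show ?thesis unfolding u_def .
qed

lemma pde_alg:
  fixes A M G x c :: real
  assumes "A > 0"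
  shows "G * ((2 - 2 * c^2 * A^2) / (2 * A) - (2 - 2 * c^2 * A^2) / 2 * (x - M)^2 + A * (- 2 * M / A) * (x - M))
    = c^2 * (G * (A^2 * (x - M)^2 - A)) + (- (x^2) + (1 / A + M^2)) * G"
  using assms by (simp add: field_simps power2_eq_square)

theorem proposition2p2:
  fixes \<sigma> a m :: real
  assumes "\<sigma> > 0" and "a > 0"
  shows "is_solution \<sigma> (gaussian a m)
           (\<lambda>t x. gaussian (a_t \<sigma> a t) (m_t \<sigma> a m t) x)"
proof -
  have Apos: "a_t \<sigma> a t > 0" if "t \<ge> 0" for t using den_pos[OF assms that] by simp
  have c0: "a_t \<sigma> a 0 = a" "m_t \<sigma> a m 0 = m" using assms by (auto simp: a_t_def m_t_def)
  show ?thesis unfolding is_solution_def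
  proof (intro conjI allI impI)
    show "(\<lambda>x. gaussian (a_t \<sigma> a 0) (m_t \<sigma> a m 0) x) = gaussian a m" by (simp add: c0)
    show "(\<lambda>x. gaussian (a_t \<sigma> a t) (m_t \<sigma> a m t) x) absolutely_integrable_on UNIV" if "0 \<le> t" for t
      using gaussian_int(3)[OF Apos[OF that]] by simp
    show "((\<lambda>t. integral UNIV (\<lambda>y. \<bar>gaussian (a_t \<sigma> a t) (m_t \<sigma> a m t) y
            - gaussian (a_t \<sigma> a t0) (m_t \<sigma> a m t0) y\<bar>)) \<longlongrightarrow> 0) (at t0 within {0..})"
      if "0 \<le> t0" for t0 using L1_cont[OF assms that] .
    show "(\<lambda>y. y^2 * gaussian (a_t \<sigma> a t) (m_t \<sigma> a m t) y) absolutely_integrable_on UNIV" if "0 < t" for t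
      using gaussian_mom2(3)[OF Apos] that by simp
    fix c d :: real assume cd: "0 < c \<and> c \<le> d"
    have "(\<lambda>t. 1 / a_t \<sigma> a t + (m_t \<sigma> a m t)^2) integrable_on {c..d}"
    proof (rule integrable_continuous_real)
      have "continuous (at t) (\<lambda>t. 1 / a_t \<sigma> a t + (m_t \<sigma> a m t)^2)" if "t \<in> {c..d}" for t
      proof -
        have t: "t \<ge> 0" using that cd by auto
        have "isCont (a_t \<sigma> a) t" using a_t_deriv[OF assms t] by (rule DERIV_isCont)
        moreover have "isCont (m_t \<sigma> a m) t" using m_t_deriv[OF assms t] by (rule DERIV_isCont)
        ultimately show ?thesis using Apos[OF t] by (intro continuous_intros) auto
      qed
      then show "continuous_on {c..d} (\<lambda>t. 1 / a_t \<sigma> a t + (m_t \<sigma> a m t)^2)"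
        by (intro continuous_at_imp_continuous_on) auto
    qed
    then show "(\<lambda>t. integral UNIV (\<lambda>y. y^2 * \<bar>gaussian (a_t \<sigma> a t) (m_t \<sigma> a m t) y\<bar>)) integrable_on {c..d}"
    proof (rule integrable_eq)
      fix t assume "t \<in> {c..d}"
      then have t: "t \<ge> 0" using cd by auto
      have "(\<lambda>y. y^2 * \<bar>gaussian (a_t \<sigma> a t) (m_t \<sigma> a m t) y\<bar>) = (\<lambda>y. y^2 * gaussian (a_t \<sigma> a t) (m_t \<sigma> a m t) y)"
        using gaussian_nonneg[OF Apos[OF t]] by auto
      then show "1 / a_t \<sigma> a t + (m_t \<sigma> a m t)^2 = integral UNIV (\<lambda>y. y^2 * \<bar>gaussian (a_t \<sigma> a t) (m_t \<sigma> a m t) y\<bar>)"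
        using gaussian_mom2(2)[OF Apos[OF t]] by simp
    qed
  next
    fix t x :: real assume "0 < t"
    show "(\<lambda>x. gaussian (a_t \<sigma> a t) (m_t \<sigma> a m t) x) differentiable at x"
      using gauss_dx real_differentiable_def by fastforce
    show "deriv (\<lambda>x. gaussian (a_t \<sigma> a t) (m_t \<sigma> a m t) x) differentiable at x"
      using gauss_dxx real_differentiable_def unfolding gauss_deriv[unfolded eta_contract_eq] by fastforce
  next
    fix t x :: real assume t: "0 < t"
    let ?A = "a_t \<sigma> a t" and ?M = "m_t \<sigma> a m t"
    have D: "((\<lambda>s. gaussian (a_t \<sigma> a s) (m_t \<sigma> a m s) x) has_real_derivative
      gaussian ?A ?M x * ((2 - 2 * \<sigma>^2 * ?A^2) / (2 * ?A) - (2 - 2 * \<sigma>^2 * ?A^2) / 2 * (x - ?M)^2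
        + ?A * (- 2 * ?M / ?A) * (x - ?M))) (at t)"
      using t by (intro gauss_dt a_t_deriv m_t_deriv assms Apos) auto
    have I: "integral UNIV (\<lambda>y. y^2 * gaussian ?A ?M y) = 1 / ?A + ?M^2"
      using gaussian_mom2(2)[OF Apos] t by simp
    show "((\<lambda>s. gaussian (a_t \<sigma> a s) (m_t \<sigma> a m s) x) has_real_derivative
          (\<sigma>^2 * deriv (deriv (\<lambda>x. gaussian ?A ?M x)) x
           + (- (x^2) + integral UNIV (\<lambda>y. y^2 * gaussian ?A ?M y)) * gaussian ?A ?M x)) (at t)"
      unfolding I eta_contract_eq gauss_deriv2 using D pde_alg[OF Apos, of t] t by simp
  qed
qed

end
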